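(* Let $T=(V,E)$ be a rooted phylogenetic tree on a finite set $\mathcal{X}$ of taxa, let $\mathcal{G}$ be a finite set of genes, let $G:\mathcal{X}\to 2^{\mathcal{G}}$ be a genome assignment, and let $k$ be a positive integer. Then: (i) $\ell(T,G,k)\ge \sqrt{\tfrac{2}{3}\,|\{v\in V : n(v)>k\}|}$; (ii) $\ell(T,G,k)\le \left\lceil \frac{|\mathcal{G}|-k}{k}\right\rceil\cdot(|\mathcal{X}|+1)$.
   Context: A digraph is rooted if it has a vertex $\rho$ of indegree zero such that every vertex is reachable from $\rho$ by a directed path. A phylogenetic tree on $\mathcal{X}$ is a rooted tree (arcs directed away from the root) whose root has degree at least two, all other internal vertices have degree at least three, and whose leaf set is $\mathcal{X}$. A phylogenetic network on $\mathcal{X}$ is a rooted acyclic digraph whose root has outdegree at least two, in which every vertex $v$ of outdegree $1$ has indegree at least $2$, and whose set of outdegree-zero vertices (leaves) is $\mathcal{X}$. A genome assignment is any map $G:\mathcal{X}\to 2^{\mathcal{G}}$. For a phylogenetic network $N=(V,A)$ on $\mathcal{X}$ and positive integer $k$, a $(G,k)$-gene labelling of $N$ is a map $F:V\to 2^{\mathcal{G}}$ such that (I) $F(x)=G(x)$ for all $x\in\mathcal{X}$; (II) $|F(v)|\le k$ for all $v\in V$; (III) for each $g\in\mathcal{G}$, the sub-digraph of $N$ induced by $\{v\in V: g\in F(v)\}$ is rooted. A network $N$ is obtained from $T$ by adding $h$ arcs if $N$ has a subgraph $T'$ that is a subdivision of $T$ (obtained by replacing arcs by directed paths) and exactly $h$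 arcs of $N$ are not arcs of $T'$. $\ell(T,G,k)$ denotes the minimum $h$ such that some phylogenetic network obtained from $T$ by adding $h$ arcs admits a $(G,k)$-gene labelling. For a vertex $v$ of $T$, $n(v)$ is the number of genes $g\in\mathcal{G}$ for which there exist leaves $x_1,x_2\in\mathcal{X}$ with $g\in G(x_1)\cap G(x_2)$ and whose most recent common ancestor in $T$ is $v$. *)

theory Defs
  imports Complex_Main "HOL-Library.Extended_Real"
begin

definition indeg :: "'a set \<Rightarrow> ('a \<times> 'a) set \<Rightarrow> 'a \<Rightarrow> nat" where
  "indeg V A v = card {u \<in> V. (u, v) \<in> A}"

definition outdeg :: "'a set \<Rightarrow> ('a \<times> 'a) set \<Rightarrow> 'a \<Rightarrow> nat" where
  "outdeg V A v = card {w \<in> V. (v, w) \<in> A}"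

definition digraph :: "'a set \<Rightarrow> ('a \<times> 'a) set \<Rightarrow> bool" where
  "digraph V A \<longleftrightarrow> finite V \<and> A \<subseteq> V \<times> V"

definition is_root :: "'a set \<Rightarrow> ('a \<times> 'a) set \<Rightarrow> 'a \<Rightarrow> bool" where
  "is_root V A \<rho> \<longleftrightarrow> \<rho> \<in> V \<and> indeg V A \<rho> = 0 \<and> (\<forall>v\<in>V. (\<rho>, v) \<in> (A \<inter> V \<times> V)\<^sup>*)"

definition rooted :: "'a set \<Rightarrow> ('a \<times> 'a) set \<Rightarrow> bool" where
  "rooted V A \<longleftrightarrow> (\<exists>\<rho>. is_root V A \<rho>)"

definition induced_rooted :: "('a \<times> 'a) set \<Rightarrow> 'a set \<Rightarrow> bool" where
  "induced_rooted A S \<longleftrightarrow> rooted S (A \<inter> S \<times> S)"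

definition phylo_tree :: "'a set \<Rightarrow> 'a set \<Rightarrow> ('a \<times> 'a) set \<Rightarrow> bool" where
  "phylo_tree X V A \<longleftrightarrow> digraph V A \<and>
     (\<exists>\<rho>. is_root V A \<rho> \<and>
        (\<forall>v\<in>V - {\<rho>}. indeg V A v = 1) \<and>
        outdeg V A \<rho> \<ge> 2 \<and>
        (\<forall>v\<in>V - {\<rho>}. outdeg V A v \<noteq> 0 \<longrightarrow> indeg V A v + outdeg V A v \<ge> 3)) \<and>
     {v \<in> V. outdeg V A v = 0} = X"

definition phylo_network :: "'a set \<Rightarrow> 'a set \<Rightarrow> ('a \<times> 'a) set \<Rightarrow> bool" where
  "phylo_network X V A \<longleftrightarrow> digraph V A \<and> acyclic A \<and>
     (\<exists>\<rho>. is_root V A \<rho> \<and> outdeg V A \<rho> \<ge> 2) \<and>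
     (\<forall>v\<in>V. outdeg V A v = 1 \<longrightarrow> indeg V A v \<ge> 2) \<and>
     {v \<in> V. outdeg V A v = 0} = X"

definition interior :: "'b list \<Rightarrow> 'b list" where
  "interior p = butlast (tl p)"

definition path_arcs :: "'b list \<Rightarrow> ('b \<times> 'b) set" where
  "path_arcs p = set (zip p (tl p))"

text \<open>(V',A') is a subdivision of (V,A): vertex v of the original corresponds to
  phi v, and each arc e = (u,v) is replaced by the directed path P e from phi u to phi v;
  the paths are internally vertex-disjoint and their interior vertices are new.\<close>
definition subdivision ::
  "'a set \<Rightarrow> ('a \<times> 'a) set \<Rightarrow> 'b set \<Rightarrow> ('b \<times> 'b) set \<Rightarrow> ('a \<Rightarrow> 'b) \<Rightarrow> ('a \<times> 'a \<Rightarrow> 'b list) \<Rightarrow> bool"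
  where
  "subdivision V A V' A' \<phi> P \<longleftrightarrow>
     inj_on \<phi> V \<and>
     (\<forall>e\<in>A. length (P e) \<ge> 2 \<and> hd (P e) = \<phi> (fst e) \<and> last (P e) = \<phi> (snd e) \<and>
             distinct (P e) \<and> set (interior (P e)) \<inter> \<phi> ` V = {}) \<and>
     (\<forall>e1\<in>A. \<forall>e2\<in>A. e1 \<noteq> e2 \<longrightarrow> set (interior (P e1)) \<inter> set (interior (P e2)) = {}) \<and>
     V' = \<phi> ` V \<union> (\<Union>e\<in>A. set (P e)) \<and>
     A' = (\<Union>e\<in>A. path_arcs (P e))"

text \<open>Network vertices have type 'a + nat, the
  network's leaf x being Inl x.\<close>
definition obtained_by_adding ::
  "'a set \<Rightarrow> 'a set \<Rightarrow> ('a \<times> 'a) set \<Rightarrow> ('a + nat) set \<Rightarrow> (('a + nat) \<times> ('a + nat)) set \<Rightarrow> nat \<Rightarrow> bool"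
  where
  "obtained_by_adding X V A VN AN h \<longleftrightarrow>
     (\<exists>VT AT \<phi> P. VT \<subseteq> VN \<and> AT \<subseteq> AN \<and> subdivision V A VT AT \<phi> P \<and>
        (\<forall>x\<in>X. \<phi> x = Inl x) \<and> card (AN - AT) = h)"

definition gene_labelling ::
  "'x set \<Rightarrow> 'g set \<Rightarrow> ('x \<Rightarrow> 'g set) \<Rightarrow> nat \<Rightarrow> ('x + nat) set \<Rightarrow> (('x + nat) \<times> ('x + nat)) set
     \<Rightarrow> (('x + nat) \<Rightarrow> 'g set) \<Rightarrow> bool" where
  "gene_labelling X Gs G k VN AN F \<longleftrightarrow>
     (\<forall>x\<in>X. F (Inl x) = G x) \<and>
     (\<forall>v\<in>VN. F v \<subseteq> Gs \<and> card (F v) \<le> k) \<and>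
     (\<forall>g\<in>Gs. induced_rooted AN {v \<in> VN. g \<in> F v})"

text \<open>ell(T,G,k) as an extended natural (infinity if no such network exists).\<close>
definition ell :: "'a set \<Rightarrow> 'a set \<Rightarrow> ('a \<times> 'a) set \<Rightarrow> 'g set \<Rightarrow> ('a \<Rightarrow> 'g set) \<Rightarrow> nat \<Rightarrow> enat" where
  "ell X V A Gs G k = Inf {enat h | h. \<exists>VN AN. phylo_network (Inl ` X) VN AN \<and>
       obtained_by_adding X V A VN AN h \<and> (\<exists>F. gene_labelling X Gs G k VN AN F)}"

definition is_mrca :: "'a set \<Rightarrow> ('a \<times> 'a) set \<Rightarrow> 'a \<Rightarrow> 'a \<Rightarrow> 'a \<Rightarrow> bool" where
  "is_mrca V A v x1 x2 \<longleftrightarrow> v \<in> V \<and> (v, x1) \<in> A\<^sup>* \<and> (v, x2) \<in> A\<^sup>* \<and>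
     (\<forall>w\<in>V. (w, x1) \<in> A\<^sup>* \<and> (w, x2) \<in> A\<^sup>* \<longrightarrow> (w, v) \<in> A\<^sup>*)"

definition nval :: "'a set \<Rightarrow> ('a \<times> 'a) set \<Rightarrow> 'a set \<Rightarrow> 'g set \<Rightarrow> ('a \<Rightarrow> 'g set) \<Rightarrow> 'a \<Rightarrow> nat" where
  "nval V A X Gs G v = card {g \<in> Gs. \<exists>x1\<in>X. \<exists>x2\<in>X. g \<in> G x1 \<inter> G x2 \<and> is_mrca V A v x1 x2}"

end

theory Submission
  imports Defs
begin


locale ptree =
  fixes X V :: "'a set" and A :: "('a \<times> 'a) set" and \<rho> :: 'a
  assumes finV: "finite V" and AV: "A \<subseteq> V \<times> V" and rhoV: "\<rho> \<in> V"
    and noin: "\<And>u. (u, \<rho>) \<notin> A"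
    and reach: "\<And>v. v \<in> V \<Longrightarrow> (\<rho>, v) \<in> A\<^sup>*"
    and indeg1: "\<And>v. v \<in> V - {\<rho>} \<Longrightarrow> indeg V A v = 1"
    and outrho: "outdeg V A \<rho> \<ge> 2"
    and outint: "\<And>v. v \<in> V - {\<rho>} \<Longrightarrow> outdeg V A v \<noteq> 0 \<Longrightarrow> outdeg V A v \<ge> 2"
    and leaves: "{v \<in> V. outdeg V A v = 0} = X"
begin

lemma finA: "finite A" using finV AV finite_subset by blast

lemma unique_parent: "(p, z) \<in> A \<Longrightarrow> (q, z) \<in> A \<Longrightarrow> p = q"
proof -
  assume a: "(p, z) \<in> A" "(q, z) \<in> A"
  hence z: "z \<in> V - {\<rho>}" using AV noin by blast
  have "card {u \<in> V. (u, z) \<in> A} = 1" using indeg1[OF z] unfolding indeg_def .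
  then obtain c where "{u \<in> V. (u, z) \<in> A} = {c}" by (meson card_1_singletonE)
  moreover have "p \<in> {u \<in> V. (u, z) \<in> A}" "q \<in> {u \<in> V. (u, z) \<in> A}" using a AV by auto
  ultimately show ?thesis by auto
qed

lemma trancl_V: "(a, b) \<in> A\<^sup>+ \<Longrightarrow> a \<in> V \<and> b \<in> V"
  using AV by (metis (no_types, lifting) SigmaD1 SigmaD2 subsetD trancl.cases tranclD)

lemma acyc: "acyclic A"
proof -
  have "(w, w) \<notin> A\<^sup>+" if "(\<rho>, w) \<in> A\<^sup>*" for w
    using that
  proof (induction rule: rtrancl_induct)
    case base
    show ?case using noin by (metis tranclD2)
  next
    case (step y z)
    show ?case
    proof
      assume "(z, z) \<in> A\<^sup>+"
      then obtain p where p: "(z, p) \<in> A\<^sup>*" "(p, z) \<in> A" by (metis tranclD2)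
      with step have "p = y" using unique_parent by blast
      with p step(2) have "(y, y) \<in> A\<^sup>+" by (meson rtrancl_into_trancl2)
      with step show False by blast
    qed
  qed
  thus ?thesis unfolding acyclic_def using trancl_V reach by blast
qed

lemma antisym_rt: "(a, b) \<in> A\<^sup>* \<Longrightarrow> (b, a) \<in> A\<^sup>* \<Longrightarrow> a = b"
  using acyc unfolding acyclic_def
  by (metis rtrancl_eq_or_trancl trancl_rtrancl_trancl)

lemma comparable: "(a, c) \<in> A\<^sup>* \<Longrightarrow> (b, c) \<in> A\<^sup>* \<Longrightarrow> (a, b) \<in> A\<^sup>* \<or> (b, a) \<in> A\<^sup>*"
proof (induction c rule: rtrancl_induct)
  case base
  then show ?case by blast
next
  case (step y z)
  show ?case
  proof (cases "b = z")
    case True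
    then show ?thesis using step by (meson rtrancl.rtrancl_into_rtrancl)
  next
    case False
    then have "(b, z) \<in> A\<^sup>+" using step by (auto simp: rtrancl_eq_or_trancl)
    then obtain p where "(b, p) \<in> A\<^sup>*" "(p, z) \<in> A" by (metis tranclD2)
    then have "(b, y) \<in> A\<^sup>*" using unique_parent step by blast
    then show ?thesis using step by blast
  qed
qed

lemma leaf_iff: "x \<in> X \<longleftrightarrow> x \<in> V \<and> (\<forall>w. (x, w) \<notin> A)"
proof -
  have "outdeg V A x = 0 \<longleftrightarrow> (\<forall>w. (x, w) \<notin> A)" if "x \<in> V" for x
  proof -
    have "finite {w \<in> V. (x, w) \<in> A}" using finV by simp
    thus ?thesis unfolding outdeg_def using AV by auto
  qed
  thus ?thesis using leaves by blast
qed

end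


context ptree begin

lemma reach_leaf: "w \<in> V \<Longrightarrow> \<exists>x\<in>X. (w, x) \<in> A\<^sup>*"
proof (induction w rule: wf_induct[OF finite_acyclic_wf_converse[OF finA acyc]])
  case (1 w)
  show ?case
  proof (cases "\<forall>z. (w, z) \<notin> A")
    case True
    then show ?thesis using leaf_iff 1 by blast
  next
    case False
    then obtain z where z: "(w, z) \<in> A" by blast
    then have "z \<in> V" using AV by auto
    with 1 z obtain x where "x \<in> X" "(z, x) \<in> A\<^sup>*" by blast
    then show ?thesis using z by (meson converse_rtrancl_into_rtrancl)
  qed
qed

lemma disjoint_children:
  assumes c: "(\<rho>, c1) \<in> A" "(\<rho>, c2) \<in> A" "c1 \<noteq> c2"
  shows "(c1, w) \<in> A\<^sup>* \<Longrightarrow> (c2, w) \<notin> A\<^sup>*"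
proof (induction w rule: rtrancl_induct)
  case base
  show ?case
  proof
    assume "(c2, c1) \<in> A\<^sup>*"
    then have "(c2, c1) \<in> A\<^sup>+" using c by (auto simp: rtrancl_eq_or_trancl)
    then obtain p where "(c2, p) \<in> A\<^sup>*" "(p, c1) \<in> A" by (metis tranclD2)
    then have "(c2, \<rho>) \<in> A\<^sup>*" using unique_parent c by blast
    then show False using c noin by (metis rtranclD tranclD2)
  qed
next
  case (step y z)
  show ?case
  proof
    assume a: "(c2, z) \<in> A\<^sup>*"
    show False
    proof (cases "z = c2")
      case True
      then have "y = \<rho>" using unique_parent step c by blast
      then show False using step noin c by (metis rtranclD tranclD2)
    next
      case False
      then have "(c2, z) \<in> A\<^sup>+" using a by (auto simp: rtrancl_eq_or_trancl)
      then obtain p where "(c2, p) \<in> A\<^sup>*" "(p, z) \<in> A" by (metis tranclD2)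
      then have "(c2, y) \<in> A\<^sup>*" using unique_parent step by blast
      then show False using step by blast
    qed
  qed
qed

lemma two_leaves: "card X \<ge> 2"
proof -
  have fin: "finite {w \<in> V. (\<rho>, w) \<in> A}" using finV by simp
  have "card {w \<in> V. (\<rho>, w) \<in> A} \<ge> 2" using outrho unfolding outdeg_def .
  then have "\<not> card {w \<in> V. (\<rho>, w) \<in> A} \<le> Suc 0" by linarith
  then obtain c1 c2 where c: "c1 \<in> {w \<in> V. (\<rho>, w) \<in> A}" "c2 \<in> {w \<in> V. (\<rho>, w) \<in> A}" "c1 \<noteq> c2"
    using card_le_Suc0_iff_eq[OF fin] by blast
  obtain x1 where x1: "x1 \<in> X" "(c1, x1) \<in> A\<^sup>*" using reach_leaf c by blast
  obtain x2 where x2: "x2 \<in> X" "(c2, x2) \<in> A\<^sup>*" using reach_leaf c by blast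
  have "x1 \<noteq> x2" using disjoint_children[of c1 c2 x1] c x1 x2 by auto
  moreover have "finite X" using leaves finV by auto
  ultimately have "\<not> card X \<le> Suc 0" using x1 x2 card_le_Suc0_iff_eq by blast
  then show ?thesis by linarith
qed

end



lemma block_bound:
  fixes i n k :: nat
  assumes "i < n" "k > 0"
  shows "int (i div k) \<le> \<lceil>(real n - real k) / real k\<rceil>"
proof -
  have "i div k * k \<le> i" by simp
  hence "real (i div k) * real k < real n" using assms
    by (metis of_nat_less_iff of_nat_mult order_le_less_trans)
  hence "real (i div k) < real n / real k" using assms by (simp add: field_simps)
  hence "real (i div k) < (real n - real k) / real k + 1" using assms by (simp add: field_simps)
  hence "real (i div k) - 1 < (real n - real k) / real k" by linarith
  hence "of_int (int (i div k) - 1) < (real n - real k) / real k" by simp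
  hence "int (i div k) - 1 < \<lceil>(real n - real k) / real k\<rceil>"
    by (meson le_of_int_ceiling less_le_trans of_int_less_iff)
  thus ?thesis by linarith
qed

context ptree begin


lemma Inl_rt: "(a, b) \<in> A\<^sup>* \<Longrightarrow> (Inl a, Inl b) \<in> ((\<lambda>(a, b). (Inl a :: 'a + 'b, Inl b)) ` A)\<^sup>*"
proof (induction rule: rtrancl_induct)
  case base
  then show ?case by simp
next
  case (step y z)
  show ?case by (rule rtrancl_into_rtrancl[OF step(3)]) (use step(2) in force)
qed

lemma noself: "(a, a) \<notin> A" using acyc unfolding acyclic_def by blast

lemma rhoX: "\<rho> \<notin> X"
proof -
  have "{w \<in> V. (\<rho>, w) \<in> A} \<noteq> {}" using outrho unfolding outdeg_def by (metis card.empty not_numeral_le_zero)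
  thus ?thesis using leaf_iff by auto
qed

lemma upper:
  fixes Gs :: "'g set" and G :: "'a \<Rightarrow> 'g set" and k :: nat
  assumes finGs: "finite Gs" and GGs: "\<forall>x\<in>X. G x \<subseteq> Gs" and kpos: "k > 0"
    and Gk: "\<forall>x\<in>X. card (G x) \<le> k"
  shows "ell X V A Gs G k \<le> enat (nat (\<lceil>(real (card Gs) - real k) / real k\<rceil> * (int (card X) + 1)))"
proof -
  define n where "n = card Gs"
  obtain f where f: "bij_betw f {0..<n} Gs" using ex_bij_betw_nat_finite[OF finGs] n_def by blast
  define idx where "idx = inv_into {0..<n} f"
  have idx: "bij_betw idx Gs {0..<n}" unfolding idx_def using f by (simp add: bij_betw_inv_into)
  define m where "m = nat \<lceil>(real n - real k) / real k\<rceil>"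
  define blk where "blk g = idx g div k" for g
  define B where "B j = {g \<in> Gs. blk g = j}" for j
  have blk_le: "blk g \<le> m" if "g \<in> Gs" for g
  proof -
    have "idx g < n" using idx that by (auto simp: bij_betw_def)
    thus ?thesis using block_bound[OF _ kpos] unfolding blk_def m_def by fastforce
  qed
  have B_sub: "B j \<subseteq> Gs" for j unfolding B_def by auto
  have B_card: "card (B j) \<le> k" for j
  proof -
    have "idx ` B j \<subseteq> {j * k ..< j * k + k}"
    proof
      fix i assume "i \<in> idx ` B j"
      then obtain g where "g \<in> B j" "i = idx g" by auto
      then have "i div k = j" unfolding B_def blk_def by auto
      moreover have "i div k * k \<le> i" by (rule div_times_less_eq_dividend)
      moreover have "i < k + i div k * k" using kpos by (rule dividend_less_div_times)
      ultimately show "i \<in> {j * k ..< j * k + k}" by (simp add: add.commute)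
    qed
    hence "card (idx ` B j) \<le> k" by (metis card_atLeastLessThan card_mono diff_add_inverse finite_atLeastLessThan)
    moreover have "inj_on idx (B j)" using idx B_sub by (meson bij_betw_def inj_on_subset)
    ultimately show ?thesis by (simp add: card_image)
  qed
  define AT :: "(('a + nat) \<times> ('a + nat)) set" where "AT = (\<lambda>(a, b). (Inl a, Inl b)) ` A"
  define N :: "(('a + nat) \<times> ('a + nat)) set" where
    "N = (\<lambda>j. (Inl \<rho>, Inr j)) ` {0..<m} \<union> (\<lambda>(j, x). (Inr j, Inl x)) ` ({0..<m} \<times> X)"
  define VN :: "('a + nat) set" where "VN = Inl ` V \<union> Inr ` {0..<m}"
  define AN where "AN = AT \<union> N"
  define F :: "'a + nat \<Rightarrow> 'g set" where
    "F v = (case v of Inl u \<Rightarrow> (if u \<in> X then G u else B 0) | Inr j \<Rightarrow> B (Suc j))" for v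
  have XV: "X \<subseteq> V" using leaves by auto
  have finX: "finite X" using XV finV finite_subset by blast
  have hval: "card (AN - AT) = m * (card X + 1)"
  proof -
    have "AN - AT = N" unfolding AN_def AT_def N_def by auto
    moreover have "card N = m + m * card X"
    proof -
      have d: "(\<lambda>j. (Inl \<rho>, Inr j)) ` {0..<m} \<inter> (\<lambda>(j, x). (Inr j, Inl x)) ` ({0..<m} \<times> X) = {}" by auto
      have c1: "card ((\<lambda>j. (Inl \<rho> :: 'a + nat, Inr j :: 'a + nat)) ` {0..<m}) = m"
        by (subst card_image) (auto simp: inj_on_def)
      have c2: "card ((\<lambda>(j, x). (Inr j :: 'a + nat, Inl x :: 'a + nat)) ` ({0..<m} \<times> X)) = m * card X"
      proof -
        have "inj_on (\<lambda>(j, x). (Inr j :: 'a + nat, Inl x :: 'a + nat)) ({0..<m} \<times> X)"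
          by (auto simp: inj_on_def)
        hence "card ((\<lambda>(j, x). (Inr j :: 'a + nat, Inl x :: 'a + nat)) ` ({0..<m} \<times> X)) = card ({0..<m} \<times> X)"
          by (rule card_image)
        thus ?thesis by (simp add: card_cartesian_product)
      qed
      show ?thesis unfolding N_def using d c1 c2 finX by (simp add: card_Un_disjoint)
    qed
    ultimately show ?thesis by simp
  qed
  have AN_iff: "(y, z) \<in> AN \<longleftrightarrow> (\<exists>a b. (a, b) \<in> A \<and> y = Inl a \<and> z = Inl b) \<or>
      (\<exists>j<m. y = Inl \<rho> \<and> z = Inr j) \<or> (\<exists>j<m. \<exists>x\<in>X. y = Inr j \<and> z = Inl x)" for y z
    unfolding AN_def AT_def N_def by auto
  have AN_VN: "AN \<subseteq> VN \<times> VN"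
  proof
    fix e assume "e \<in> AN"
    then obtain y z where "e = (y, z)" "(y, z) \<in> AN" by (cases e) auto
    then show "e \<in> VN \<times> VN" unfolding AN_iff VN_def using AV XV rhoV by auto
  qed
  have finVN: "finite VN" unfolding VN_def using finV by simp
  have out_int: "{w \<in> VN. (Inl v, w) \<in> AN} = Inl ` {w \<in> V. (v, w) \<in> A}" if "v \<noteq> \<rho>" for v
    using that unfolding AN_iff VN_def by auto
  have out_rho: "Inl ` {w \<in> V. (\<rho>, w) \<in> A} \<subseteq> {w \<in> VN. (Inl \<rho>, w) \<in> AN}"
    unfolding AN_iff VN_def by auto
  have out_new: "{w \<in> VN. (Inr j, w) \<in> AN} = Inl ` X" if "j < m" for j
    using that XV unfolding AN_iff VN_def by auto
  have outdeg_int: "outdeg VN AN (Inl v) = outdeg V A v" if "v \<noteq> \<rho>" for v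
    unfolding outdeg_def out_int[OF that] by (simp add: card_image)
  have outdeg_rho: "outdeg VN AN (Inl \<rho>) \<ge> 2"
  proof -
    have "outdeg V A \<rho> = card (Inl ` {w \<in> V. (\<rho>, w) \<in> A} :: ('a + nat) set)"
      unfolding outdeg_def by (simp add: card_image)
    also have "\<dots> \<le> outdeg VN AN (Inl \<rho>)"
      unfolding outdeg_def by (rule card_mono) (use finVN out_rho in auto)
    finally show ?thesis using outrho by linarith
  qed
  have outdeg_new: "outdeg VN AN (Inr j) = card X" if "j < m" for j
    unfolding outdeg_def out_new[OF that] by (simp add: card_image)
  have noin_rho: "(u, Inl \<rho>) \<notin> AN" for u
    unfolding AN_iff using noin rhoX by auto
  have acycN: "acyclic AN"
  proof -
    define Inv :: "'a + nat \<Rightarrow> 'a + nat \<Rightarrow> bool" where "Inv y z \<longleftrightarrow> (\<exists>a b. y = Inl a \<and> z = Inl b \<and> (a, b) \<in> A\<^sup>+) \<or>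
      (y = Inl \<rho> \<and> (\<exists>j. z = Inr j)) \<or> ((\<exists>j. y = Inr j) \<and> (\<exists>x\<in>X. z = Inl x)) \<or>
      (y = Inl \<rho> \<and> (\<exists>x\<in>X. z = Inl x))" for y z
    have "Inv y z" if "(y, z) \<in> AN\<^sup>+" for y z
      using that
    proof (induction rule: trancl_induct)
      case (base z)
      then show ?case unfolding AN_iff Inv_def by auto
    next
      case (step z w)
      from step(2) consider (t) a b where "(a, b) \<in> A" "z = Inl a" "w = Inl b"
        | (r) j where "z = Inl \<rho>" "w = Inr j" | (n) j x where "x \<in> X" "z = Inr j" "w = Inl x"
        unfolding AN_iff by blast
      then show ?case
      proof cases
        case t
        then show ?thesis using step(3) leaf_iff unfolding Inv_def
          by (auto intro: trancl_into_trancl)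
      next
        case r
        then show ?thesis using step(3) noin rhoX unfolding Inv_def by (auto dest: tranclD2)
      next
        case n
        then show ?thesis using step(3) unfolding Inv_def by auto
      qed
    qed
    moreover have "\<not> Inv y y" for y using acyc rhoX unfolding Inv_def acyclic_def by auto
    ultimately show ?thesis unfolding acyclic_def by blast
  qed
  have AN_inter: "AN \<inter> VN \<times> VN = AN" using AN_VN by blast
  have ATsub: "AT \<subseteq> AN" unfolding AN_def by blast
  have root: "is_root VN AN (Inl \<rho>)"
  proof -
    have "indeg VN AN (Inl \<rho>) = 0" unfolding indeg_def using noin_rho by simp
    moreover have "(Inl \<rho>, v) \<in> AN\<^sup>*" if "v \<in> VN" for v
    proof (cases v)
      case (Inl u)
      then have "u \<in> V" using that unfolding VN_def by auto
      then have "(Inl \<rho>, Inl u) \<in> AT\<^sup>*" unfolding AT_def using Inl_rt reach by blast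
      then show ?thesis using Inl rtrancl_mono[OF ATsub] by blast
    next
      case (Inr j)
      then have "j < m" using that unfolding VN_def by auto
      then have "(Inl \<rho>, v) \<in> AN" using Inr unfolding AN_iff by auto
      then show ?thesis by blast
    qed
    ultimately show ?thesis unfolding is_root_def AN_inter using rhoV by (auto simp: VN_def)
  qed
  have net: "phylo_network (Inl ` X) VN AN"
  proof -
    have "outdeg VN AN v \<noteq> 1" if "v \<in> VN" for v
    proof (cases v)
      case (Inl u)
      show ?thesis
      proof (cases "u = \<rho>")
        case True
        then show ?thesis using outdeg_rho Inl by auto
      next
        case False
        then have "u \<in> V - {\<rho>}" using that Inl unfolding VN_def by auto
        then show ?thesis using outint[of u] outdeg_int[OF False] Inl by fastforce
      qed
    next
      case (Inr j)
      then have "j < m" using that unfolding VN_def by auto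
      then show ?thesis using outdeg_new two_leaves Inr by auto
    qed
    moreover have "{v \<in> VN. outdeg VN AN v = 0} = Inl ` X"
    proof (intro set_eqI iffI)
      fix v assume v: "v \<in> {v \<in> VN. outdeg VN AN v = 0}"
      show "v \<in> Inl ` X"
      proof (cases v)
        case (Inl u)
        have "u \<noteq> \<rho>" using v outdeg_rho Inl by auto
        then show ?thesis using v Inl outdeg_int leaves unfolding VN_def by auto
      next
        case (Inr j)
        then show ?thesis using v outdeg_new two_leaves unfolding VN_def by auto
      qed
    next
      fix v :: "'a + nat" assume "v \<in> Inl ` X"
      then obtain x where x: "x \<in> X" "v = Inl x" by auto
      then have "x \<noteq> \<rho>" using rhoX by auto
      then show "v \<in> {v \<in> VN. outdeg VN AN v = 0}" using x outdeg_int leaves XV unfolding VN_def by auto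
    qed
    ultimately show ?thesis unfolding phylo_network_def digraph_def using finVN AN_VN acycN root outdeg_rho by blast
  qed
  have obt: "obtained_by_adding X V A VN AN (m * (card X + 1))"
  proof -
    define P :: "'a \<times> 'a \<Rightarrow> ('a + nat) list" where "P e = [Inl (fst e), Inl (snd e)]" for e
    have "subdivision V A (Inl ` V) AT Inl P"
    proof -
      have pa: "path_arcs (P e) = {(Inl (fst e), Inl (snd e))}" for e
        unfolding path_arcs_def P_def by simp
      have "(\<Union>e\<in>A. path_arcs (P e)) = AT" unfolding pa AT_def by auto
      moreover have "Inl ` V = Inl ` V \<union> (\<Union>e\<in>A. set (P e))" unfolding P_def using AV by auto
      moreover have "\<forall>e\<in>A. length (P e) \<ge> 2 \<and> hd (P e) = Inl (fst e) \<and> last (P e) = Inl (snd e) \<and>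
             distinct (P e) \<and> set (interior (P e)) \<inter> Inl ` V = {}"
        unfolding P_def interior_def using noself by auto
      moreover have "\<forall>e1\<in>A. \<forall>e2\<in>A. e1 \<noteq> e2 \<longrightarrow> set (interior (P e1)) \<inter> set (interior (P e2)) = {}"
        unfolding P_def interior_def by auto
      ultimately show ?thesis unfolding subdivision_def by auto
    qed
    moreover have "Inl ` V \<subseteq> VN" unfolding VN_def by auto
    ultimately show ?thesis unfolding obtained_by_adding_def using ATsub hval by blast
  qed
  have lab: "gene_labelling X Gs G k VN AN F"
  proof -
    have I: "\<forall>x\<in>X. F (Inl x) = G x" unfolding F_def by simp
    have II: "\<forall>v\<in>VN. F v \<subseteq> Gs \<and> card (F v) \<le> k"
      unfolding F_def using GGs Gk B_sub B_card by (auto split: sum.splits)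
    have III: "induced_rooted AN {v \<in> VN. g \<in> F v}" if g: "g \<in> Gs" for g
    proof -
      define S where "S = {v \<in> VN. g \<in> F v}"
      define R where "R = AN \<inter> S \<times> S"
      have RR: "R \<inter> S \<times> S = R" unfolding R_def by blast
      show ?thesis
      proof (cases "blk g = 0")
        case True
        have gB: "g \<in> B 0" unfolding B_def using True g by simp
        have rS: "Inl \<rho> \<in> S" unfolding S_def VN_def F_def using rhoV rhoX gB by auto
        have indeg0: "indeg S R (Inl \<rho>) = 0" unfolding indeg_def R_def using noin_rho by simp
        have pth: "(u \<notin> X \<longrightarrow> (Inl \<rho>, Inl u) \<in> R\<^sup>*) \<and> (u \<in> X \<and> g \<in> G u \<longrightarrow> (Inl \<rho>, Inl u) \<in> R\<^sup>*)"
          if "(\<rho>, u) \<in> A\<^sup>*" for u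
          using that
        proof (induction rule: rtrancl_induct)
          case base
          then show ?case using rhoX by simp
        next
          case (step y z)
          have yz: "y \<in> V" "z \<in> V" using step(2) AV by auto
          have "y \<notin> X" using step(2) leaf_iff by blast
          hence r1: "(Inl \<rho>, Inl y) \<in> R\<^sup>*" using step(3) by blast
          have yS: "Inl y \<in> S" unfolding S_def VN_def F_def using \<open>y \<notin> X\<close> yz gB by auto
          have "(Inl y, Inl z) \<in> AN" unfolding AN_iff using step(2) by auto
          hence "(Inl y, Inl z) \<in> R" if "Inl z \<in> S" using that yS unfolding R_def by auto
          moreover have "Inl z \<in> S" if "z \<notin> X \<or> g \<in> G z"
            using that yz gB unfolding S_def VN_def F_def by auto
          ultimately show ?case using r1 by (meson rtrancl.rtrancl_into_rtrancl)
        qed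
        have "(Inl \<rho>, v) \<in> R\<^sup>*" if "v \<in> S" for v
        proof (cases v)
          case (Inl u)
          have "u \<in> V" "g \<in> F (Inl u)" using that Inl unfolding S_def VN_def by auto
          then show ?thesis using pth[of u] reach Inl unfolding F_def by (auto split: if_splits)
        next
          case (Inr j)
          then have "g \<in> B (Suc j)" using that unfolding S_def F_def by auto
          then show ?thesis using True unfolding B_def by auto
        qed
        then have "is_root S R (Inl \<rho>)" unfolding is_root_def RR using rS indeg0 by blast
        then show ?thesis unfolding induced_rooted_def rooted_def S_def R_def by blast
      next
        case False
        then obtain j where j: "blk g = Suc j" using not0_implies_Suc by blast
        then have jm: "j < m" using blk_le[OF g] by simp
        have gB: "g \<in> B (Suc j)" unfolding B_def using j g by simp
        have rS: "Inr j \<in> S" unfolding S_def VN_def F_def using jm gB by auto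
        have "Inl \<rho> \<notin> S" unfolding S_def F_def B_def using rhoX j by auto
        hence "{u \<in> S. (u, Inr j) \<in> R} = {}" unfolding R_def by (auto simp: AN_iff)
        hence indeg0: "indeg S R (Inr j) = 0" unfolding indeg_def by (metis card.empty)
        have "(Inr j, v) \<in> R\<^sup>*" if "v \<in> S" for v
        proof (cases v)
          case (Inl u)
          have "u \<in> V" "g \<in> F (Inl u)" using that Inl unfolding S_def VN_def by auto
          moreover have "u \<in> X" using calculation j unfolding F_def B_def by (auto split: if_splits)
          ultimately have "(Inr j, v) \<in> AN" using jm Inl unfolding AN_iff by auto
          then show ?thesis using that rS unfolding R_def by auto
        next
          case (Inr j')
          then have "g \<in> B (Suc j')" using that unfolding S_def F_def by auto
          then show ?thesis using j Inr unfolding B_def by auto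
        qed
        then have "is_root S R (Inr j)" unfolding is_root_def RR using rS indeg0 by blast
        then show ?thesis unfolding induced_rooted_def rooted_def S_def R_def by blast
      qed
    qed
    show ?thesis unfolding gene_labelling_def using I II III by blast
  qed
  have "enat (m * (card X + 1)) \<in> {enat h | h. \<exists>VN AN. phylo_network (Inl ` X) VN AN \<and>
       obtained_by_adding X V A VN AN h \<and> (\<exists>F. gene_labelling X Gs G k VN AN F)}"
    using net obt lab by blast
  hence "ell X V A Gs G k \<le> enat (m * (card X + 1))" unfolding ell_def by (rule Inf_lower)
  moreover have "m * (card X + 1) = nat (\<lceil>(real (card Gs) - real k) / real k\<rceil> * (int (card X) + 1))"
  proof (cases "\<lceil>(real (card Gs) - real k) / real k\<rceil> \<ge> 0")
    case True
    have e: "nat (int (card X) + 1) = card X + 1" by simp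
    show ?thesis unfolding m_def n_def using True by (simp only: nat_mult_distrib e)
  next
    case False
    then have "\<lceil>(real (card Gs) - real k) / real k\<rceil> * (int (card X) + 1) \<le> 0"
      by (simp add: mult_nonpos_nonneg)
    then show ?thesis using False unfolding m_def n_def by simp
  qed
  ultimately show ?thesis by simp
qed

end



lemma nth_interior: "0 < j \<Longrightarrow> j < length p - 1 \<Longrightarrow> p ! j \<in> set (interior p)"
proof -
  assume j: "0 < j" "j < length p - 1"
  have "interior p ! (j - 1) = p ! j" unfolding interior_def using j
    by (simp add: nth_butlast nth_tl)
  moreover have "j - 1 < length (interior p)" unfolding interior_def using j by simp
  ultimately show ?thesis by (metis nth_mem)
qed

locale subdiv = ptree X V A \<rho> for X V A \<rho> +
  fixes VT :: "'b set" and AT \<phi> P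
  assumes sub: "subdivision V A VT AT \<phi> P"
begin

lemma inj: "inj_on \<phi> V" using sub unfolding subdivision_def by blast
lemma Pprops: "e \<in> A \<Longrightarrow> length (P e) \<ge> 2 \<and> hd (P e) = \<phi> (fst e) \<and> last (P e) = \<phi> (snd e) \<and>
             distinct (P e) \<and> set (interior (P e)) \<inter> \<phi> ` V = {}"
  using sub unfolding subdivision_def by blast
lemma Pdisj: "e1 \<in> A \<Longrightarrow> e2 \<in> A \<Longrightarrow> y \<in> set (interior (P e1)) \<Longrightarrow> y \<in> set (interior (P e2)) \<Longrightarrow> e1 = e2"
  using sub unfolding subdivision_def by blast
lemma VT_eq: "VT = \<phi> ` V \<union> (\<Union>e\<in>A. set (P e))" using sub unfolding subdivision_def by blast
lemma AT_eq: "AT = (\<Union>e\<in>A. path_arcs (P e))" using sub unfolding subdivision_def by blast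

definition proj :: "'b \<Rightarrow> 'a" where
  "proj y = (if y \<in> \<phi> ` V then the_inv_into V \<phi> y else snd (SOME e. e \<in> A \<and> y \<in> set (interior (P e))))"

lemma proj_phi: "u \<in> V \<Longrightarrow> proj (\<phi> u) = u"
  unfolding proj_def using inj by (simp add: the_inv_into_f_f)

lemma proj_int: "e \<in> A \<Longrightarrow> y \<in> set (interior (P e)) \<Longrightarrow> proj y = snd e"
proof -
  assume e: "e \<in> A" "y \<in> set (interior (P e))"
  then have "y \<notin> \<phi> ` V" using Pprops by blast
  moreover have "(SOME e. e \<in> A \<and> y \<in> set (interior (P e))) = e"
    using e Pdisj by (metis (no_types, lifting) someI_ex)
  ultimately show ?thesis unfolding proj_def by simp
qed

lemma arc_cases:
  assumes "(y, z) \<in> AT"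
  shows "(proj y = proj z \<and> y \<notin> \<phi> ` V) \<or> ((proj y, proj z) \<in> A \<and> y = \<phi> (proj y))"
proof -
  obtain e where e: "e \<in> A" "(y, z) \<in> path_arcs (P e)" using assms AT_eq by blast
  obtain a b where ab: "e = (a, b)" by (cases e)
  have abV: "a \<in> V" "b \<in> V" using e ab AV by auto
  define p where "p = P e"
  have pp: "length p \<ge> 2" "hd p = \<phi> a" "last p = \<phi> b" "distinct p" "set (interior p) \<inter> \<phi> ` V = {}"
    using Pprops[OF e(1)] ab unfolding p_def by auto
  obtain i where i: "i < length p - 1" "y = p ! i" "z = p ! Suc i"
    using e(2) unfolding path_arcs_def p_def[symmetric] by (auto simp: set_zip nth_tl)
  have hd0: "p ! 0 = \<phi> a" using pp by (metis hd_conv_nth list.size(3) not_numeral_le_zero)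
  have lastn: "p ! (length p - 1) = \<phi> b" using pp by (metis last_conv_nth list.size(3) not_numeral_le_zero)
  have zb: "proj z = b"
  proof (cases "Suc i = length p - 1")
    case True
    then show ?thesis using i lastn proj_phi abV by auto
  next
    case False
    then have "z \<in> set (interior p)" using i nth_interior[of "Suc i" p] by simp
    then show ?thesis using proj_int[OF e(1)] ab unfolding p_def by simp
  qed
  show ?thesis
  proof (cases "i = 0")
    case True
    then have "y = \<phi> a" using i hd0 by simp
    then show ?thesis using zb proj_phi abV e ab by auto
  next
    case False
    then have yint: "y \<in> set (interior p)" using i nth_interior[of i p] by simp
    then have "proj y = b" using proj_int[OF e(1)] ab unfolding p_def by simp
    moreover have "y \<notin> \<phi> ` V" using yint pp by blast
    ultimately show ?thesis using zb by simp
  qed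
qed

lemma AT_VT: "AT \<subseteq> VT \<times> VT"
proof
  fix x assume "x \<in> AT"
  then obtain e where e: "e \<in> A" "x \<in> path_arcs (P e)" using AT_eq by blast
  obtain y z where x: "x = (y, z)" by (cases x)
  have "y \<in> set (P e)" using e(2) x unfolding path_arcs_def by (auto dest: set_zip_leftD)
  moreover have "z \<in> set (tl (P e))" using e(2) x unfolding path_arcs_def by (auto dest: set_zip_rightD)
  hence "z \<in> set (P e)" by (cases "P e") auto
  ultimately have "x \<in> set (P e) \<times> set (P e)" using x by simp
  then show "x \<in> VT \<times> VT" using VT_eq e by blast
qed

lemma proj_V: "y \<in> VT \<Longrightarrow> proj y \<in> V"
proof -
  assume "y \<in> VT"
  then consider "y \<in> \<phi> ` V" | e where "e \<in> A" "y \<in> set (P e)" "y \<notin> \<phi> ` V" using VT_eq by blast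
  then show ?thesis
  proof cases
    case 1
    then show ?thesis using proj_phi by auto
  next
    case 2
    have "hd (P e) \<in> \<phi> ` V" "last (P e) \<in> \<phi> ` V" using Pprops[OF 2(1)] AV 2(1) by auto
    obtain j where j: "j < length (P e)" "P e ! j = y" using 2(2) by (auto simp: in_set_conv_nth)
    have ne: "P e \<noteq> []" using 2 by auto
    have "j \<noteq> 0" using j 2(3) \<open>hd (P e) \<in> \<phi> ` V\<close> ne by (metis hd_conv_nth)
    moreover have "j \<noteq> length (P e) - 1" using j 2(3) \<open>last (P e) \<in> \<phi> ` V\<close> ne by (metis last_conv_nth)
    ultimately have "y \<in> set (interior (P e))" using j nth_interior[of j "P e"] by simp
    then show ?thesis using proj_int[OF 2(1)] 2 AV by auto
  qed
qed

lemma proj_rt: "(y, z) \<in> AT\<^sup>* \<Longrightarrow> (proj y, proj z) \<in> A\<^sup>*"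
proof (induction rule: rtrancl_induct)
  case base then show ?case by simp
next
  case (step u w)
  then show ?case using arc_cases[OF step(2)] by (metis rtrancl.rtrancl_into_rtrancl)
qed

end



lemma last_added:
  assumes "(r, x) \<in> R\<^sup>*"
  shows "(r, x) \<in> (R \<inter> AT)\<^sup>* \<or> (\<exists>t s. (t, s) \<in> R \<and> (t, s) \<notin> AT \<and> (s, x) \<in> (R \<inter> AT)\<^sup>*)"
  using assms
proof (induction rule: rtrancl_induct)
  case base then show ?case by simp
next
  case (step y z)
  show ?case
  proof (cases "(y, z) \<in> AT")
    case True
    then have yz: "(y, z) \<in> R \<inter> AT" using step by blast
    from step(3) show ?thesis
      by (meson rtrancl.rtrancl_into_rtrancl yz)
  next
    case False
    then show ?thesis using step(2) by blast
  qed
qed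

lemma first_added:
  assumes "(r, x) \<in> R\<^sup>*"
  shows "(r, x) \<in> (R \<inter> AT)\<^sup>* \<or> (\<exists>t s. (r, t) \<in> (R \<inter> AT)\<^sup>* \<and> (t, s) \<in> R \<and> (t, s) \<notin> AT)"
  using assms
proof (induction rule: converse_rtrancl_induct)
  case base then show ?case by simp
next
  case (step y z)
  show ?case
  proof (cases "(y, z) \<in> AT")
    case True
    then have yz: "(y, z) \<in> R \<inter> AT" using step by blast
    from step(3) show ?thesis
      by (meson converse_rtrancl_into_rtrancl yz)
  next
    case False
    then show ?thesis using step(1) by blast
  qed
qed

context subdiv begin

lemma back_prop:
  assumes "(s, x) \<in> (R \<inter> AT)\<^sup>*" "\<forall>(y, z)\<in>R. y \<noteq> \<phi> v"
    "(v, proj x) \<in> A\<^sup>+" "\<forall>w\<in>V. (w, proj x) \<in> A\<^sup>* \<and> Q w \<longrightarrow> (w, v) \<in> A\<^sup>*"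
  shows "(v, proj s) \<in> A\<^sup>+ \<and> (\<forall>w\<in>V. (w, proj s) \<in> A\<^sup>* \<and> Q w \<longrightarrow> (w, v) \<in> A\<^sup>*)"
  using assms(1)
proof (induction rule: converse_rtrancl_induct)
  case base
  then show ?case using assms by blast
next
  case (step y z)
  have yz: "(y, z) \<in> AT" "(y, z) \<in> R" using step by auto
  from arc_cases[OF yz(1)] show ?case
  proof
    assume "proj y = proj z \<and> y \<notin> \<phi> ` V"
    then show ?thesis using step by simp
  next
    assume a: "(proj y, proj z) \<in> A \<and> y = \<phi> (proj y)"
    have "y \<noteq> \<phi> v" using yz(2) assms(2) by blast
    hence ne: "proj y \<noteq> v" using a by metis
    obtain p where p: "(v, p) \<in> A\<^sup>*" "(p, proj z) \<in> A" using step(3) by (metis tranclD2)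
    then have "p = proj y" using a unique_parent by blast
    then have "(v, proj y) \<in> A\<^sup>+" using p ne by (auto simp: rtrancl_eq_or_trancl)
    moreover have "(w, v) \<in> A\<^sup>*" if "w \<in> V" "(w, proj y) \<in> A\<^sup>*" "Q w" for w
      using step(3) that a by (meson rtrancl.rtrancl_into_rtrancl)
    ultimately show ?thesis by blast
  qed
qed

definition isL :: "'a \<Rightarrow> 'b set \<Rightarrow> bool" where
  "isL v Z \<longleftrightarrow> v \<in> V \<and> (\<forall>y\<in>Z. (v, proj y) \<in> A\<^sup>*) \<and> (\<forall>w\<in>V. (\<forall>y\<in>Z. (w, proj y) \<in> A\<^sup>*) \<longrightarrow> (w, v) \<in> A\<^sup>*)"

definition M :: "'b set \<Rightarrow> 'a" where "M Z = (THE v. isL v Z)"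

lemma M_eq: "isL v Z \<Longrightarrow> M Z = v"
  unfolding M_def
  by (rule the_equality) (auto simp: isL_def intro: antisym_rt)

lemma pair_lemma:
  assumes "v \<in> V" "(v, proj p) \<in> A\<^sup>+" "(v, proj q) \<in> A\<^sup>+"
    "\<forall>w\<in>V. (w, proj p) \<in> A\<^sup>* \<and> (w, proj q) \<in> A\<^sup>* \<longrightarrow> (w, v) \<in> A\<^sup>*"
  shows "p \<noteq> q \<and> M {p, q} = v"
proof
  show "p \<noteq> q"
  proof
    assume "p = q"
    have "proj p \<in> V" using assms(2) trancl_V by blast
    then have "(proj p, v) \<in> A\<^sup>*" using assms(4) \<open>p = q\<close> by blast
    then show False using assms(2) acyc unfolding acyclic_def
      by (meson rtrancl_into_trancl2 trancl_into_rtrancl trancl_rtrancl_trancl)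
  qed
  show "M {p, q} = v"
    by (rule M_eq) (use assms in \<open>auto simp: isL_def\<close>)
qed

end



locale labsetup = subdiv X V A \<rho> VT AT \<phi> P for X V A \<rho> VT AT \<phi> P +
  fixes VN AN and F :: "'b \<Rightarrow> 'g set" and Gs :: "'g set" and G k
  assumes phiX: "\<And>x. x \<in> X \<Longrightarrow> F (\<phi> x) = G x"
    and VTN: "VT \<subseteq> VN" and ATN: "AT \<subseteq> AN" and finAN: "finite AN"
    and Fk: "\<And>u. u \<in> VN \<Longrightarrow> card (F u) \<le> k \<and> F u \<subseteq> Gs"
    and rootd: "\<And>g. g \<in> Gs \<Longrightarrow> induced_rooted AN {u \<in> VN. g \<in> F u}"
    and finGs: "finite Gs"
begin

definition Hd where "Hd = snd ` (AN - AT)"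
definition Tl where "Tl = fst ` (AN - AT)"
definition PP where "PP = {Z. Z \<subseteq> Hd \<and> card Z = 2} \<union> (\<lambda>(t, s). {t, s}) ` (Tl \<times> Hd)"

lemma XV: "X \<subseteq> V" using leaves by auto

lemma phiVT: "\<phi> ` V \<subseteq> VT" using VT_eq by blast

lemma mrca_sym: "is_mrca V A v x1 x2 \<Longrightarrow> is_mrca V A v x2 x1"
  unfolding is_mrca_def by blast

lemma one_side:
  assumes v: "v \<in> V" and x: "x1 \<in> X" "x2 \<in> X" and mr: "is_mrca V A v x1 x2"
    and gS: "\<phi> x1 \<in> S" "\<phi> x2 \<in> S" "\<phi> v \<notin> S"
    and R: "R \<subseteq> AN \<inter> S \<times> S"
    and r: "(r, \<phi> x1) \<in> (R \<inter> AT)\<^sup>*" "(r, \<phi> x2) \<in> R\<^sup>*"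
  shows "v \<in> M ` PP"
proof -
  have noarc: "\<forall>(y, z)\<in>R. y \<noteq> \<phi> v" using R gS by blast
  have x12V: "x1 \<in> V" "x2 \<in> V" using x XV by auto
  have vx1: "(v, x1) \<in> A\<^sup>+" using mr gS unfolding is_mrca_def by (auto simp: rtrancl_eq_or_trancl)
  have vx2: "(v, x2) \<in> A\<^sup>+" using mr gS unfolding is_mrca_def by (auto simp: rtrancl_eq_or_trancl)
  have P1: "(v, proj r) \<in> A\<^sup>+ \<and> (\<forall>w\<in>V. (w, proj r) \<in> A\<^sup>* \<and> (w, x2) \<in> A\<^sup>* \<longrightarrow> (w, v) \<in> A\<^sup>*)"
    by (rule back_prop[OF r(1) noarc]) (use vx1 mr x12V proj_phi in \<open>auto simp: is_mrca_def\<close>)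
  have rx1: "(proj r, x1) \<in> A\<^sup>*"
    using proj_rt[of r "\<phi> x1"] r(1) proj_phi x12V rtrancl_mono[of "R \<inter> AT" AT] by auto
  have P2: "(v, proj s) \<in> A\<^sup>+ \<and> (\<forall>w\<in>V. (w, proj s) \<in> A\<^sup>* \<and> (w, proj r) \<in> A\<^sup>* \<longrightarrow> (w, v) \<in> A\<^sup>*)"
    if "(s, \<phi> x2) \<in> (R \<inter> AT)\<^sup>*" for s
    by (rule back_prop[OF that noarc])
      (use vx2 mr x12V proj_phi rx1 in \<open>auto simp: is_mrca_def intro: rtrancl_trans\<close>)
  have rV: "proj r \<in> V" using P1 trancl_V by blast
  have cyc: False if "(proj r, v) \<in> A\<^sup>*"
    using that P1 acyc unfolding acyclic_def by (meson rtrancl_into_trancl2 trancl_into_rtrancl trancl_rtrancl_trancl)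
  have notAT: False if "(r, \<phi> x2) \<in> (R \<inter> AT)\<^sup>*"
    using P2[OF that] rV cyc by blast
  obtain t0 s2 where s2: "(t0, s2) \<in> R" "(t0, s2) \<notin> AT" "(s2, \<phi> x2) \<in> (R \<inter> AT)\<^sup>*"
    using last_added[OF r(2)] notAT by blast
  obtain t b where t: "(r, t) \<in> (R \<inter> AT)\<^sup>*" "(t, b) \<in> R" "(t, b) \<notin> AT"
    using first_added[OF r(2)] notAT by blast
  have rt: "(proj r, proj t) \<in> A\<^sup>*"
    using proj_rt t(1) rtrancl_mono[of "R \<inter> AT" AT] by auto
  note Q2 = P2[OF s2(3)]
  have "t \<noteq> s2 \<and> M {t, s2} = v"
  proof (rule pair_lemma[OF v])
    show "(v, proj t) \<in> A\<^sup>+" using P1 rt by (meson trancl_rtrancl_trancl)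
    show "(v, proj s2) \<in> A\<^sup>+" using Q2 by blast
    show "\<forall>w\<in>V. (w, proj t) \<in> A\<^sup>* \<and> (w, proj s2) \<in> A\<^sup>* \<longrightarrow> (w, v) \<in> A\<^sup>*"
    proof (intro ballI impI)
      fix w assume w: "w \<in> V" "(w, proj t) \<in> A\<^sup>* \<and> (w, proj s2) \<in> A\<^sup>*"
      from comparable[of w "proj t" "proj r"] w rt
      consider "(w, proj r) \<in> A\<^sup>*" | "(proj r, w) \<in> A\<^sup>*" by blast
      then show "(w, v) \<in> A\<^sup>*"
      proof cases
        case 1 then show ?thesis using Q2 w by blast
      next
        case 2
        then have "(proj r, proj s2) \<in> A\<^sup>*" using w by (meson rtrancl_trans)
        then have "(proj r, v) \<in> A\<^sup>*" using Q2 rV by blast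
        then show ?thesis using cyc by blast
      qed
    qed
  qed
  moreover have "{t, s2} \<in> PP"
  proof -
    have "t \<in> Tl" using t R unfolding Tl_def by force
    moreover have "s2 \<in> Hd" using s2 R unfolding Hd_def by force
    ultimately show ?thesis unfolding PP_def by blast
  qed
  ultimately show ?thesis by (metis image_eqI)
qed


lemma bad:
  assumes v: "v \<in> V" and nv: "nval V A X Gs G v > k"
  shows "v \<in> M ` PP"
proof -
  define Gv where "Gv = {g \<in> Gs. \<exists>x1\<in>X. \<exists>x2\<in>X. g \<in> G x1 \<inter> G x2 \<and> is_mrca V A v x1 x2}"
  have cGv: "card Gv > k" using nv unfolding nval_def Gv_def by simp
  have pvN: "\<phi> v \<in> VN" using v phiVT VTN by blast
  have "\<not> Gv \<subseteq> F (\<phi> v)"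
  proof
    assume "Gv \<subseteq> F (\<phi> v)"
    moreover have "finite (F (\<phi> v))" using Fk[OF pvN] finGs finite_subset by blast
    ultimately have "card Gv \<le> card (F (\<phi> v))" by (rule card_mono[rotated])
    then show False using Fk[OF pvN] cGv by linarith
  qed
  then obtain g x1 x2 where g: "g \<in> Gs" "x1 \<in> X" "x2 \<in> X" "g \<in> G x1" "g \<in> G x2"
    "is_mrca V A v x1 x2" "g \<notin> F (\<phi> v)" unfolding Gv_def by blast
  define S where "S = {u \<in> VN. g \<in> F u}"
  define R where "R = AN \<inter> S \<times> S"
  obtain r where r: "is_root S (AN \<inter> S \<times> S) r" using rootd[OF g(1)]
    unfolding induced_rooted_def rooted_def S_def by blast
  have RR: "R \<inter> S \<times> S = R" unfolding R_def by blast
  have reachS: "(r, u) \<in> R\<^sup>*" if "u \<in> S" for u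
    using r that unfolding is_root_def R_def[symmetric] RR by blast
  have xS: "\<phi> x \<in> S" if "x \<in> X" "g \<in> G x" for x
  proof -
    have "\<phi> x \<in> VN" using that XV phiVT VTN by blast
    then show ?thesis using that phiX unfolding S_def by auto
  qed
  have gS: "\<phi> x1 \<in> S" "\<phi> x2 \<in> S" "\<phi> v \<notin> S" using xS g unfolding S_def by auto
  have Rsub: "R \<subseteq> AN \<inter> S \<times> S" unfolding R_def by simp
  have r1: "(r, \<phi> x1) \<in> R\<^sup>*" and r2: "(r, \<phi> x2) \<in> R\<^sup>*" using reachS gS by auto
  show ?thesis
  proof (cases "(r, \<phi> x1) \<in> (R \<inter> AT)\<^sup>*")
    case True
    show ?thesis by (rule one_side[OF v g(2,3,6) gS Rsub True r2])
  next
    case F1: False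
    show ?thesis
    proof (cases "(r, \<phi> x2) \<in> (R \<inter> AT)\<^sup>*")
      case True
      show ?thesis by (rule one_side[OF v g(3,2) mrca_sym[OF g(6)] gS(2,1,3) Rsub True r1])
    next
      case F2: False
      obtain t1 s1 where s1: "(t1, s1) \<in> R" "(t1, s1) \<notin> AT" "(s1, \<phi> x1) \<in> (R \<inter> AT)\<^sup>*"
        using last_added[OF r1] F1 by blast
      obtain t2 s2 where s2: "(t2, s2) \<in> R" "(t2, s2) \<notin> AT" "(s2, \<phi> x2) \<in> (R \<inter> AT)\<^sup>*"
        using last_added[OF r2] F2 by blast
      have noarc: "\<forall>(y, z)\<in>R. y \<noteq> \<phi> v" using Rsub gS by blast
      have x12V: "x1 \<in> V" "x2 \<in> V" using g XV by auto
      have mr: "is_mrca V A v x1 x2" by (rule g(6))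
      have vx1: "(v, x1) \<in> A\<^sup>+" using mr gS unfolding is_mrca_def by (auto simp: rtrancl_eq_or_trancl)
      have vx2: "(v, x2) \<in> A\<^sup>+" using mr gS unfolding is_mrca_def by (auto simp: rtrancl_eq_or_trancl)
      have P1: "(v, proj s1) \<in> A\<^sup>+ \<and> (\<forall>w\<in>V. (w, proj s1) \<in> A\<^sup>* \<and> (w, x2) \<in> A\<^sup>* \<longrightarrow> (w, v) \<in> A\<^sup>*)"
        by (rule back_prop[OF s1(3) noarc]) (use vx1 mr x12V proj_phi in \<open>auto simp: is_mrca_def\<close>)
      have sx1: "(proj s1, x1) \<in> A\<^sup>*"
        using proj_rt[of s1 "\<phi> x1"] s1(3) proj_phi x12V rtrancl_mono[of "R \<inter> AT" AT] by auto
      have P2: "(v, proj s2) \<in> A\<^sup>+ \<and> (\<forall>w\<in>V. (w, proj s2) \<in> A\<^sup>* \<and> (w, proj s1) \<in> A\<^sup>* \<longrightarrow> (w, v) \<in> A\<^sup>*)"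
        by (rule back_prop[OF s2(3) noarc])
          (use vx2 mr x12V proj_phi sx1 in \<open>auto simp: is_mrca_def intro: rtrancl_trans\<close>)
      have "s1 \<noteq> s2 \<and> M {s1, s2} = v"
        by (rule pair_lemma[OF v]) (use P1 P2 in blast)+
      moreover have "{s1, s2} \<in> PP"
      proof -
        have "s1 \<in> Hd" "s2 \<in> Hd" using s1 s2 Rsub unfolding Hd_def by force+
        then show ?thesis using calculation unfolding PP_def by auto
      qed
      ultimately show ?thesis by (metis image_eqI)
    qed
  qed
qed

lemma count: "card {v \<in> V. nval V A X Gs G v > k} \<le> (card Hd choose 2) + card Tl * card Hd"
proof -
  have fH: "finite Hd" "finite Tl" unfolding Hd_def Tl_def using finAN by auto
  have "{v \<in> V. nval V A X Gs G v > k} \<subseteq> M ` PP" using bad by blast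
  moreover have fPP: "finite PP" unfolding PP_def using fH by auto
  ultimately have "card {v \<in> V. nval V A X Gs G v > k} \<le> card (M ` PP)"
    by (meson card_mono finite_imageI)
  also have "\<dots> \<le> card PP" by (rule card_image_le[OF fPP])
  also have "\<dots> \<le> card {Z. Z \<subseteq> Hd \<and> card Z = 2} + card ((\<lambda>(t, s). {t, s}) ` (Tl \<times> Hd))"
    unfolding PP_def by (rule card_Un_le)
  also have "\<dots> \<le> (card Hd choose 2) + card Tl * card Hd"
  proof -
    have "card ((\<lambda>(t, s). {t, s}) ` (Tl \<times> Hd)) \<le> card (Tl \<times> Hd)"
      using fH by (intro card_image_le) auto
    then show ?thesis using n_subsets[OF fH(1), of 2] by (simp add: card_cartesian_product)
  qed
  finally show ?thesis .
qed

lemma count_h: "card {v \<in> V. nval V A X Gs G v > k} \<le> (card (AN - AT) choose 2) + card (AN - AT) * card (AN - AT)"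
proof -
  have f: "finite (AN - AT)" using finAN by auto
  have "card Hd \<le> card (AN - AT)" "card Tl \<le> card (AN - AT)" unfolding Hd_def Tl_def
    using card_image_le[OF f] by auto
  moreover have "card Hd choose 2 \<le> card (AN - AT) choose 2" using calculation(1) by (rule binomial_right_mono)
  ultimately show ?thesis using count by (meson add_le_mono le_trans mult_le_mono)
qed

end



lemma sqrt_bound:
  fixes c h :: nat
  assumes "c \<le> (h choose 2) + h * h"
  shows "sqrt (2/3 * real c) \<le> real h"
proof -
  have "2 * (h choose 2) \<le> h * (h - 1)" unfolding choose_two by simp
  also have "\<dots> \<le> h * h" by simp
  finally have "2 * (h choose 2) \<le> h * h" .
  hence "2 * c \<le> 3 * (h * h)" using assms by linarith
  hence "2 * real c \<le> 3 * (real h * real h)" by (metis of_nat_le_iff of_nat_mult of_nat_numeral)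
  hence "2/3 * real c \<le> (real h)\<^sup>2" by (simp add: power2_eq_square)
  hence "sqrt (2/3 * real c) \<le> sqrt ((real h)\<^sup>2)" by (rule real_sqrt_le_mono)
  thus ?thesis by simp
qed

theorem theorem1:
  fixes X V :: "'a set" and A :: "('a \<times> 'a) set" and Gs :: "'g set"
    and G :: "'a \<Rightarrow> 'g set" and k :: nat
  assumes "phylo_tree X V A"
    and "finite Gs"
    and "\<forall>x\<in>X. G x \<subseteq> Gs"
    and "k > 0"
    and "\<forall>x\<in>X. card (G x) \<le> k"
  shows "ereal (sqrt (2/3 * real (card {v \<in> V. nval V A X Gs G v > k}))) \<le> ereal_of_enat (ell X V A Gs G k) \<and>
     ell X V A Gs G k \<le> enat (nat (\<lceil>(real (card Gs) - real k) / real k\<rceil> * (int (card X) + 1)))"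
proof -
  from assms(1) obtain \<rho> where dg: "digraph V A" and rt: "is_root V A \<rho>"
    and i1: "\<forall>v\<in>V - {\<rho>}. indeg V A v = 1" and o2: "outdeg V A \<rho> \<ge> 2"
    and o3: "\<forall>v\<in>V - {\<rho>}. outdeg V A v \<noteq> 0 \<longrightarrow> indeg V A v + outdeg V A v \<ge> 3"
    and lv: "{v \<in> V. outdeg V A v = 0} = X"
    unfolding phylo_tree_def by blast
  have finV: "finite V" and AV: "A \<subseteq> V \<times> V" using dg unfolding digraph_def by auto
  have AVV: "A \<inter> V \<times> V = A" using AV by blast
  interpret ptree X V A \<rho>
  proof
    show "finite V" "A \<subseteq> V \<times> V" by (fact finV) (fact AV)
    show "\<rho> \<in> V" using rt unfolding is_root_def by blast
    show "(u, \<rho>) \<notin> A" for u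
    proof
      assume "(u, \<rho>) \<in> A"
      then have "u \<in> {u \<in> V. (u, \<rho>) \<in> A}" using AV by auto
      moreover have "finite {u \<in> V. (u, \<rho>) \<in> A}" using finV by simp
      ultimately have "card {u \<in> V. (u, \<rho>) \<in> A} \<noteq> 0" by (metis card_0_eq empty_iff)
      then show False using rt unfolding is_root_def indeg_def by simp
    qed
    show "v \<in> V \<Longrightarrow> (\<rho>, v) \<in> A\<^sup>*" for v using rt unfolding is_root_def AVV by blast
    show "v \<in> V - {\<rho>} \<Longrightarrow> indeg V A v = 1" for v using i1 by blast
    show "outdeg V A \<rho> \<ge> 2" by (fact o2)
    show "v \<in> V - {\<rho>} \<Longrightarrow> outdeg V A v \<noteq> 0 \<Longrightarrow> outdeg V A v \<ge> 2" for v
    proof -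
      assume a: "v \<in> V - {\<rho>}" "outdeg V A v \<noteq> 0"
      then have "indeg V A v = 1" "indeg V A v + outdeg V A v \<ge> 3" using i1 o3 by auto
      then show ?thesis by linarith
    qed
    show "{v \<in> V. outdeg V A v = 0} = X" by (fact lv)
  qed
  have part2: "ell X V A Gs G k \<le> enat (nat (\<lceil>(real (card Gs) - real k) / real k\<rceil> * (int (card X) + 1)))"
    using upper assms(2-5) by blast
  define SS where "SS = {enat h | h. \<exists>VN AN. phylo_network (Inl ` X) VN AN \<and>
       obtained_by_adding X V A VN AN h \<and> (\<exists>F. gene_labelling X Gs G k VN AN F)}"
  have ellS: "ell X V A Gs G k = Inf SS" unfolding ell_def SS_def ..
  have part1: "ereal (sqrt (2/3 * real (card {v \<in> V. nval V A X Gs G v > k}))) \<le> ereal_of_enat (ell X V A Gs G k)"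
  proof (cases "SS = {}")
    case True
    then show ?thesis unfolding ellS by (simp add: Inf_enat_def)
  next
    case False
    then obtain z where "z \<in> SS" by blast
    then have "Inf SS \<in> SS" using False unfolding Inf_enat_def by (simp add: LeastI[of "\<lambda>x. x \<in> SS" z])
    then obtain h VN AN F where e: "ell X V A Gs G k = enat h" and net: "phylo_network (Inl ` X) VN AN"
      and ob: "obtained_by_adding X V A VN AN h" and lab: "gene_labelling X Gs G k VN AN F"
      unfolding SS_def ellS by blast
    obtain VT AT \<phi> P where o: "VT \<subseteq> VN" "AT \<subseteq> AN" "subdivision V A VT AT \<phi> P"
      "\<forall>x\<in>X. \<phi> x = Inl x" "card (AN - AT) = h"
      using ob unfolding obtained_by_adding_def by blast
    have finAN: "finite AN" using net unfolding phylo_network_def digraph_def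
      by (meson finite_SigmaI finite_subset)
    interpret labsetup X V A \<rho> VT AT \<phi> P VN AN F Gs G k
    proof
      show "subdivision V A VT AT \<phi> P" by (fact o(3))
      show "x \<in> X \<Longrightarrow> F (\<phi> x) = G x" for x using o(4) lab unfolding gene_labelling_def by auto
      show "VT \<subseteq> VN" by (fact o(1))
      show "AT \<subseteq> AN" by (fact o(2))
      show "finite AN" by (fact finAN)
      show "u \<in> VN \<Longrightarrow> card (F u) \<le> k \<and> F u \<subseteq> Gs" for u using lab unfolding gene_labelling_def by auto
      show "g \<in> Gs \<Longrightarrow> induced_rooted AN {u \<in> VN. g \<in> F u}" for g
        using lab unfolding gene_labelling_def by auto
      show "finite Gs" by (fact assms(2))
    qed
    have "sqrt (2/3 * real (card {v \<in> V. nval V A X Gs G v > k})) \<le> real h"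
      using sqrt_bound count_h o(5) by metis
    then show ?thesis unfolding e by simp
  qed
  show ?thesis using part1 part2 by blast
qed


end
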